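(* Let $n \ge 2$ and $r \in \mathbb{Z}$ with $r \equiv 2 \pmod 3$ and $3 \mid n$. Then neither $\mathcal{E}_{n,r} := \mathcal{P}_n(2;1-r)$ nor $\mathcal{P}_n(r;r)$ is a regular presentation of $Q_{4n}$.
   Context: $Q_{4n}$ is identified with $\langle x, y \mid x^n y^{-2}, xyxy^{-1} \rangle$. A presentation $\langle x, y \mid x^n y^{-2}, R\rangle$ is regular if $x \mapsto x$, $y \mapsto y$ induces a group isomorphism from the group it presents to $Q_{4n}$. For integers $n_1,m_1$, $\mathcal{P}_n(n_1;m_1) = \langle x, y \mid x^n y^{-2},\ x^{n_1} y x^{m_1} y^{-1} x^{1-n_1} y x^{1-m_1} y^{-1} \rangle$. *)

theory Defs
  imports "HOL-Algebra.Algebra"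
begin

(* Words in the free group on two generators x, y.
   A letter is (g, i): g = False means x, g = True means y; i = True means inverse. *)
type_synonym letter = "bool \<times> bool"

definition inv_letter :: "letter \<Rightarrow> letter" where
  "inv_letter a = (fst a, \<not> snd a)"

inductive rel_cong :: "letter list set \<Rightarrow> letter list \<Rightarrow> letter list \<Rightarrow> bool"
  for R :: "letter list set" where
  rc_refl: "rel_cong R u u"
| rc_sym: "rel_cong R u v \<Longrightarrow> rel_cong R v u"
| rc_trans: "rel_cong R u v \<Longrightarrow> rel_cong R v w \<Longrightarrow> rel_cong R u w"
| rc_cancel: "rel_cong R (u @ [a, inv_letter a] @ v) (u @ v)"
| rc_rel: "r \<in> R \<Longrightarrow> rel_cong R (u @ r @ v) (u @ v)"

definition wclass :: "letter list set \<Rightarrow> letter list \<Rightarrow> letter list set" where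
  "wclass R w = {v. rel_cong R w v}"

definition pres_group :: "letter list set \<Rightarrow> letter list set monoid" where
  "pres_group R =
    \<lparr> carrier = range (wclass R),
      monoid.mult = (\<lambda>A B. {w. \<exists>a\<in>A. \<exists>b\<in>B. rel_cong R (a @ b) w}),
      one = wclass R [] \<rparr>"

definition gx :: letter where "gx = (False, False)"
definition gy :: letter where "gy = (True, False)"

definition gpow :: "letter \<Rightarrow> int \<Rightarrow> letter list" where
  "gpow g k = (if k \<ge> 0 then replicate (nat k) g else replicate (nat (- k)) (inv_letter g))"

definition rel_base :: "nat \<Rightarrow> letter list" where
  "rel_base n = gpow gx (int n) @ gpow gy (-2)"

definition Q_rels :: "nat \<Rightarrow> letter list set" where
  "Q_rels n = {rel_base n, [gx, gy, gx, inv_letter gy]}"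

definition regular_pres :: "nat \<Rightarrow> letter list \<Rightarrow> bool" where
  "regular_pres n R \<longleftrightarrow>
     (\<exists>h. h \<in> iso (pres_group {rel_base n, R}) (pres_group (Q_rels n)) \<and>
          h (wclass {rel_base n, R} [gx]) = wclass (Q_rels n) [gx] \<and>
          h (wclass {rel_base n, R} [gy]) = wclass (Q_rels n) [gy])"

definition P_rel :: "int \<Rightarrow> int \<Rightarrow> letter list" where
  "P_rel n1 m1 = gpow gx n1 @ [gy] @ gpow gx m1 @ [inv_letter gy] @
                 gpow gx (1 - n1) @ [gy] @ gpow gx (1 - m1) @ [inv_letter gy]"

end

theory Submission
  imports Defs
begin

definition px :: "nat \<Rightarrow> nat" where
  "px k = (if k = 0 then 1 else if k = 1 then 2 else if k = 2 then 0 else k)"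
definition pxi :: "nat \<Rightarrow> nat" where
  "pxi k = (if k = 0 then 2 else if k = 1 then 0 else if k = 2 then 1 else k)"
definition py :: "nat \<Rightarrow> nat" where
  "py k = (if k = 2 then 3 else if k = 3 then 2 else k)"

definition fl :: "letter \<Rightarrow> nat \<Rightarrow> nat" where
  "fl a = (if fst a then py else if snd a then pxi else px)"

fun ev :: "letter list \<Rightarrow> nat \<Rightarrow> nat" where
  "ev [] = id"
| "ev (a # w) = fl a \<circ> ev w"

lemma ev_append: "ev (u @ v) = ev u \<circ> ev v"
  by (induction u) auto

lemma fl_cancel: "fl a \<circ> fl (inv_letter a) = id"
  by (cases a) (auto simp: fl_def inv_letter_def px_def pxi_def py_def fun_eq_iff)

lemma rel_cong_ev:
  assumes "\<And>r. r \<in> R \<Longrightarrow> ev r = id"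
  shows "rel_cong R u v \<Longrightarrow> ev u = ev v"
proof (induction rule: rel_cong.induct)
  case (rc_cancel u a v)
  have "ev [a, inv_letter a] = id" using fl_cancel[of a] by simp
  moreover have "ev (u @ [a, inv_letter a] @ v) = ev u \<circ> ev [a, inv_letter a] \<circ> ev v"
    by (simp only: ev_append comp_assoc)
  ultimately show ?case by (simp add: ev_append)
next
  case (rc_rel r u v)
  then show ?case using assms by (simp add: ev_append)
qed auto

lemma px3: "px ^^ 3 = id"
  by (auto simp: px_def fun_eq_iff numeral_3_eq_3)

lemma pxi_eq: "pxi = px ^^ 2"
  by (auto simp: px_def pxi_def fun_eq_iff numeral_2_eq_2)

lemma pow_mod: "px ^^ m = px ^^ (m mod 3)"
proof -
  have e: "m = 3 * (m div 3) + m mod 3" by simp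
  have "px ^^ m = px ^^ (3 * (m div 3)) \<circ> px ^^ (m mod 3)"
    by (subst e) (simp only: funpow_add)
  also have "px ^^ (3 * (m div 3)) = (px ^^ 3) ^^ (m div 3)" by (simp add: funpow_mult)
  finally show ?thesis using px3 by (simp add: id_funpow)
qed

lemma ev_rep: "ev (replicate m g) = fl g ^^ m"
  by (induction m) (auto simp: funpow_Suc_right[symmetric] funpow_swap1)

lemma ev_gpow: "ev (gpow gx k) = px ^^ nat (k mod 3)"
proof (cases "k \<ge> 0")
  case True
  then have "ev (gpow gx k) = px ^^ nat k"
    by (simp add: gpow_def ev_rep fl_def gx_def)
  also have "\<dots> = px ^^ (nat k mod 3)" by (rule pow_mod)
  also have "nat k mod 3 = nat (k mod 3)" using True by (simp add: nat_mod_distrib)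
  finally show ?thesis .
next
  case False
  then have "ev (gpow gx k) = (px ^^ 2) ^^ nat (-k)"
    by (simp add: gpow_def ev_rep fl_def gx_def inv_letter_def pxi_eq)
  also have "\<dots> = px ^^ (2 * nat (-k))" by (simp add: funpow_mult)
  also have "\<dots> = px ^^ (2 * nat (-k) mod 3)" by (rule pow_mod)
  also have "2 * nat (-k) mod 3 = nat (k mod 3)"
  proof -
    have "int (2 * nat (-k) mod 3) = (2 * (-k)) mod 3" using False
      by (simp add: zmod_int)
    also have "\<dots> = k mod 3" by (simp add: mod_eq_dvd_iff)
    finally show ?thesis by simp
  qed
  finally show ?thesis .
qed


lemma rc_ctx: "rel_cong R u v \<Longrightarrow> rel_cong R (w @ u @ z) (w @ v @ z)"
proof (induction rule: rel_cong.induct)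
  case (rc_cancel u a v)
  show ?case using rel_cong.rc_cancel[of R "w @ u" a "v @ z"] by simp
next
  case (rc_rel r u v)
  show ?case using rel_cong.rc_rel[of r R "w @ u" "v @ z"] rc_rel by simp
qed (auto intro: rel_cong.intros)

lemma rc_app: "rel_cong R u u' \<Longrightarrow> rel_cong R v v' \<Longrightarrow> rel_cong R (u @ v) (u' @ v')"
proof -
  assume a: "rel_cong R u u'" and b: "rel_cong R v v'"
  have "rel_cong R ([] @ u @ v) ([] @ u' @ v)" by (rule rc_ctx[OF a])
  moreover have "rel_cong R (u' @ v @ []) (u' @ v' @ [])" by (rule rc_ctx[OF b])
  ultimately show ?thesis by (auto intro: rel_cong.rc_trans)
qed

lemma wmult: "wclass R u \<otimes>\<^bsub>pres_group R\<^esub> wclass R v = wclass R (u @ v)"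
proof -
  have "{w. \<exists>a\<in>wclass R u. \<exists>b\<in>wclass R v. rel_cong R (a @ b) w} = wclass R (u @ v)"
  proof
    show "{w. \<exists>a\<in>wclass R u. \<exists>b\<in>wclass R v. rel_cong R (a @ b) w} \<subseteq> wclass R (u @ v)"
      by (auto simp: wclass_def intro: rel_cong.rc_trans rc_app)
    show "wclass R (u @ v) \<subseteq> {w. \<exists>a\<in>wclass R u. \<exists>b\<in>wclass R v. rel_cong R (a @ b) w}"
      by (auto simp: wclass_def intro: rel_cong.rc_refl)
  qed
  then show ?thesis by (simp add: pres_group_def)
qed

lemma wcarrier: "wclass R u \<in> carrier (pres_group R)"
  by (simp add: pres_group_def)

lemma Q_xyx: "wclass (Q_rels n) [gx, gy, gx] = wclass (Q_rels n) [gy]"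
proof -
  have "rel_cong (Q_rels n) [gx, gy, gx] [gy]"
  proof -
    have "rel_cong (Q_rels n) ([gx, gy, gx] @ [inv_letter gy, inv_letter (inv_letter gy)] @ []) ([gx, gy, gx] @ [])"
      by (rule rel_cong.rc_cancel)
    then have 1: "rel_cong (Q_rels n) [gx, gy, gx] ([gx, gy, gx, inv_letter gy] @ [gy])"
      by (auto simp: inv_letter_def intro: rel_cong.rc_sym)
    have "rel_cong (Q_rels n) ([] @ [gx, gy, gx, inv_letter gy] @ [gy]) ([] @ [gy])"
      by (rule rel_cong.rc_rel) (simp add: Q_rels_def)
    then show ?thesis using 1 by (auto intro: rel_cong.rc_trans)
  qed
  then have "rel_cong (Q_rels n) [gx, gy, gx] v = rel_cong (Q_rels n) [gy] v" for v
    by (meson rel_cong.rc_sym rel_cong.rc_trans)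
  then show ?thesis by (simp add: wclass_def)
qed

lemma not_regular:
  assumes "ev (rel_base n) = id" and "ev R = id" and "ev [gx, gy, gx] \<noteq> ev [gy]"
  shows "\<not> regular_pres n R"
proof
  assume "regular_pres n R"
  then obtain h where h: "h \<in> iso (pres_group {rel_base n, R}) (pres_group (Q_rels n))"
    and hx: "h (wclass {rel_base n, R} [gx]) = wclass (Q_rels n) [gx]"
    and hy: "h (wclass {rel_base n, R} [gy]) = wclass (Q_rels n) [gy]"
    unfolding regular_pres_def by blast
  let ?R = "{rel_base n, R}"
  have hom: "h \<in> hom (pres_group ?R) (pres_group (Q_rels n))" and
    inj: "inj_on h (carrier (pres_group ?R))"
    using h by (auto simp: iso_def bij_betw_def)
  have "h (wclass ?R [gx, gy, gx]) = h (wclass ?R [gx] \<otimes>\<^bsub>pres_group ?R\<^esub> wclass ?R [gy] \<otimes>\<^bsub>pres_group ?R\<^esub> wclass ?R [gx])"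
    by (simp add: wmult)
  also have "\<dots> = wclass (Q_rels n) [gx] \<otimes>\<^bsub>pres_group (Q_rels n)\<^esub> wclass (Q_rels n) [gy] \<otimes>\<^bsub>pres_group (Q_rels n)\<^esub> wclass (Q_rels n) [gx]"
    using hom_mult[OF hom wcarrier wcarrier, of "[gx] @ [gy]" "[gx]"]
      hom_mult[OF hom wcarrier wcarrier, of "[gx]" "[gy]"] hx hy
    by (simp only: wmult)
  also have "\<dots> = wclass (Q_rels n) [gy]" by (simp add: wmult Q_xyx)
  also have "\<dots> = h (wclass ?R [gy])" using hy by simp
  finally have "wclass ?R [gx, gy, gx] = wclass ?R [gy]"
    using inj by (simp add: inj_on_def wcarrier)
  then have "rel_cong ?R [gx, gy, gx] [gy]"
    by (auto simp: wclass_def intro: rel_cong.rc_refl)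
  then have "ev [gx, gy, gx] = ev [gy]"
    by (rule rel_cong_ev[rotated]) (use assms in auto)
  with assms(3) show False by simp
qed

lemma ev_base: "3 dvd n \<Longrightarrow> ev (rel_base n) = id"
proof -
  assume "3 dvd n"
  then have "int n mod 3 = 0" by presburger
  then have "ev (gpow gx (int n)) = id" by (simp add: ev_gpow)
  moreover have "ev (gpow gy (-2)) = id"
    by (simp add: gpow_def numeral_2_eq_2 fl_def gy_def inv_letter_def py_def fun_eq_iff)
  ultimately show ?thesis by (simp add: rel_base_def ev_append)
qed

lemma cyc: "pxi \<circ> py \<circ> pxi \<circ> py \<circ> pxi \<circ> py \<circ> pxi \<circ> py = id"
proof (rule ext)
  fix k :: nat
  have big: "pxi k = k" "py k = k" if "k > 3" for k using that by (auto simp: pxi_def py_def)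
  have "k = 0 \<or> k = 1 \<or> k = 2 \<or> k = 3 \<or> k > 3" by linarith
  then show "(pxi \<circ> py \<circ> pxi \<circ> py \<circ> pxi \<circ> py \<circ> pxi \<circ> py) k = id k"
    by (elim disjE) (simp_all add: big pxi_def py_def)
qed
lemma ev_P: assumes "a mod 3 = 2" "b mod 3 = 2" "(1 - a) mod 3 = 2" "(1 - b) mod 3 = 2"
  shows "ev (P_rel a b) = id"
proof -
  have p2: "px ^^ nat 2 = pxi" by (simp add: pxi_eq)
  have "ev (gpow gx a) = pxi" "ev (gpow gx b) = pxi" "ev (gpow gx (1-a)) = pxi" "ev (gpow gx (1-b)) = pxi"
    using assms by (simp_all only: ev_gpow p2)
  then show ?thesis
    by (simp add: P_rel_def ev_append fl_def gy_def inv_letter_def comp_assoc cyc[simplified comp_assoc])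
qed
lemma ev_xyx: "ev [gx, gy, gx] \<noteq> ev [gy]"
proof
  assume "ev [gx, gy, gx] = ev [gy]"
  then have "ev [gx, gy, gx] 0 = ev [gy] 0" by simp
  then show False by (simp add: fl_def gx_def gy_def px_def py_def)
qed

theorem proposition3p12:
  fixes n :: nat and r :: int
  assumes "n \<ge> 2" and "r mod 3 = 2" and "3 dvd n"
  shows "\<not> regular_pres n (P_rel 2 (1 - r)) \<and> \<not> regular_pres n (P_rel r r)"
proof
  have m1: "(1 - r) mod 3 = 2" using assms(2) by presburger
  have m2: "(1 - (1 - r)) mod 3 = 2" using assms(2) by simp
  show "\<not> regular_pres n (P_rel 2 (1 - r))"
    by (rule not_regular[OF ev_base[OF assms(3)] ev_P ev_xyx]) (use m1 m2 in auto)
  show "\<not> regular_pres n (P_rel r r)"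
    by (rule not_regular[OF ev_base[OF assms(3)] ev_P ev_xyx]) (use m1 assms(2) in auto)
qed

end
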